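(* Let $d\ge2$ and for $i=1,\dots,d$ let $u_i\in C^2(\mathbb R)$ be such that $u_i'$ is $T_i$-periodic for some $T_i>0$, the zeros of $u_i'$ are isolated, and $u_i''(t)=0$ at every zero $t$ of $u_i'$. Let $u(x)=\sum_{i=1}^du_i(x_i)$ for $x\in\mathbb R^d$, $Y=\prod_{i=1}^d[0,T_i]$, and let $X$ be the gradient flow $\partial_tX(t,x)=\nabla u(X(t,x))$, $X(0,x)=x$. Then the trajectories of $X$ are bounded if and only if each $u_i'$ has a zero in $\mathbb R$. Moreover, the following are equivalent: (a) there is $C>0$ such that $\big|\int_0^t\Delta u(X(s,x))\,ds\big|\le C$ for all $t\ge0$ and $x\in\mathbb R^d$; (b) $\prod_{i=1}^du_i'(x_i)\neq0$ for all $x\in\mathbb R^d$; (c) there exists a positive $Y$-periodic function $\sigma\in C^1(\mathbb R^d)$ with $\mathrm{div}(\sigma\nabla u)=0$ in $\mathbb R^d$. *)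

theory Defs
  imports "HOL-Analysis.Analysis"
begin

definition partial_deriv :: "(real^'n \<Rightarrow> real) \<Rightarrow> 'n \<Rightarrow> real^'n \<Rightarrow> real" where
  "partial_deriv f i y = deriv (\<lambda>h. f (y + h *\<^sub>R axis i 1)) 0"

definition gradient_vec :: "(real^'n \<Rightarrow> real) \<Rightarrow> real^'n \<Rightarrow> real^'n" where
  "gradient_vec f y = (\<chi> i. partial_deriv f i y)"

definition divergence :: "(real^'n \<Rightarrow> real^'n) \<Rightarrow> real^'n \<Rightarrow> real" where
  "divergence F y = (\<Sum>i\<in>UNIV. partial_deriv (\<lambda>z. F z $ i) i y)"

definition laplacian :: "(real^'n \<Rightarrow> real) \<Rightarrow> real^'n \<Rightarrow> real" where
  "laplacian f y = divergence (gradient_vec f) y"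

definition sep_sum :: "('n::finite \<Rightarrow> real \<Rightarrow> real) \<Rightarrow> real^'n \<Rightarrow> real" where
  "sep_sum uu x = (\<Sum>i\<in>UNIV. uu i (x $ i))"

end

theory Submission
  imports Defs
begin


lemma ode_fwd:
  fixes f f' x :: "real \<Rightarrow> real"
  assumes df: "\<And>t. (f has_real_derivative f' t) (at t)"
    and cf: "continuous_on UNIV f'"
    and dx: "\<And>t. (x has_real_derivative f (x t)) (at t)"
    and z: "f (x t0) = 0" and tt: "t0 \<le> t"
  shows "x t = x t0"
proof -
  define z where "z = x t0"
  have contx: "continuous_on {t0..t} x"
    using dx by (meson DERIV_continuous continuous_at_imp_continuous_on)
  have "compact (x ` {t0..t})" by (rule compact_continuous_image[OF contx]) auto
  then obtain R where R: "\<And>s. s \<in> {t0..t} \<Longrightarrow> \<bar>x s\<bar> \<le> R"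
    by (metis bounded_iff compact_imp_bounded image_eqI real_norm_def)
  have "compact (f' ` {-R..R})"
    by (rule compact_continuous_image) (auto intro: continuous_on_subset[OF cf])
  then obtain L0 where L0: "\<And>s. s \<in> {-R..R} \<Longrightarrow> \<bar>f' s\<bar> \<le> L0"
    by (metis bounded_iff compact_imp_bounded image_eqI real_norm_def)
  define L where "L = \<bar>L0\<bar>"
  have L: "\<And>s. s \<in> {-R..R} \<Longrightarrow> \<bar>f' s\<bar> \<le> L" "L \<ge> 0" using L0 unfolding L_def by force+
  have lip: "\<bar>f u - f v\<bar> \<le> L * \<bar>u - v\<bar>" if "u \<in> {-R..R}" "v \<in> {-R..R}" for u v
  proof -
    have "\<bar>f u - f v\<bar> \<le> L * \<bar>u - v\<bar>" if "u < v" "u \<in> {-R..R}" "v \<in> {-R..R}" for u v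
    proof -
      obtain c where c: "u < c" "c < v" "f v - f u = (v - u) * f' c"
        using MVT2[OF \<open>u < v\<close>, of f f'] df by blast
      have "c \<in> {-R..R}" using c that by auto
      hence "\<bar>f' c\<bar> \<le> L" using L by auto
      have "\<bar>f u - f v\<bar> = \<bar>f' c\<bar> * (v - u)" 
      proof -
        have "\<bar>f u - f v\<bar> = \<bar>f v - f u\<bar>" by (rule abs_minus_commute)
        also have "\<dots> = \<bar>v - u\<bar> * \<bar>f' c\<bar>" using c(3) by (simp add: abs_mult)
        finally show ?thesis using c by simp
      qed
      thus ?thesis using \<open>\<bar>f' c\<bar> \<le> L\<close> c by (simp add: mult_right_mono)
    qed
    note * = this
    show ?thesis
    proof (cases u v rule: linorder_cases)
      case greater
      from *[OF this that(2,1)] show ?thesis by (simp add: abs_minus_commute)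
    qed (use * that in auto)
  qed
  define g where "g s = (x s - z)^2 * exp (-2*L*(s - t0))" for s
  have "g t \<le> g t0"
  proof (rule DERIV_nonpos_imp_nonincreasing[OF tt])
    fix s assume s: "t0 \<le> s" "s \<le> t"
    have xs: "x s \<in> {-R..R}" "z \<in> {-R..R}" using R[of s] R[of t0] s tt unfolding z_def by auto
    have D: "(g has_real_derivative
       (2 * (x s - z) * f (x s)) * exp (-2*L*(s - t0)) + (x s - z)^2 * (exp (-2*L*(s - t0)) * (-2*L))) (at s)"
      unfolding g_def
      by (auto intro!: derivative_eq_intros dx simp: power2_eq_square)
    have "(x s - z) * f (x s) = (x s - z) * (f (x s) - f z)" using z unfolding z_def by simp
    also have "\<dots> \<le> \<bar>x s - z\<bar> * \<bar>f (x s) - f z\<bar>" by (metis abs_ge_self abs_mult)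
    also have "\<dots> \<le> \<bar>x s - z\<bar> * (L * \<bar>x s - z\<bar>)" using lip[OF xs] by (simp add: mult_left_mono)
    also have "\<dots> = L * (x s - z)^2" by (simp add: power2_eq_square abs_mult_self_eq)
    finally have "(x s - z) * f (x s) \<le> L * (x s - z)^2" .
    hence "2 * (x s - z) * f (x s) + (x s - z)^2 * (-2*L) \<le> 0" by (simp add: algebra_simps)
    have "(2 * (x s - z) * f (x s)) * exp (-2*L*(s - t0)) + (x s - z)^2 * (exp (-2*L*(s - t0)) * (-2*L)) \<le> 0"
    proof -
      have "(2 * (x s - z) * f (x s)) * exp (-2*L*(s - t0)) + (x s - z)^2 * (exp (-2*L*(s - t0)) * (-2*L))
         = (2 * (x s - z) * f (x s) + (x s - z)^2 * (-2*L)) * exp (-2*L*(s - t0))"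
        by (simp add: algebra_simps)
      also have "\<dots> \<le> 0" by (rule mult_nonpos_nonneg) (use \<open>2 * (x s - z) * f (x s) + (x s - z)^2 * (-2*L) \<le> 0\<close> in auto)
      finally show ?thesis .
    qed
    thus "\<exists>y. (g has_real_derivative y) (at s) \<and> y \<le> 0" using D by blast
  qed
  moreover have "g t0 = 0" unfolding g_def z_def by simp
  moreover have "g t \<ge> 0" unfolding g_def by simp
  ultimately have "g t = 0" by linarith
  thus ?thesis unfolding g_def z_def by simp
qed

lemma ode_const:
  fixes f f' x :: "real \<Rightarrow> real"
  assumes df: "\<And>t. (f has_real_derivative f' t) (at t)"
    and cf: "continuous_on UNIV f'"
    and dx: "\<And>t. (x has_real_derivative f (x t)) (at t)"
    and z: "f (x t0) = 0"
  shows "x t = x t0"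
proof (cases "t0 \<le> t")
  case True thus ?thesis by (rule ode_fwd[OF df cf dx z])
next
  case False
  define y where "y = (\<lambda>s. x (- s))"
  have "y (- t) = y (- t0)"
  proof (rule ode_fwd[where f = "\<lambda>v. - f v" and f' = "\<lambda>v. - f' v" and x = y and t = "- t" and t0 = "- t0"])
    show "((\<lambda>v. - f v) has_real_derivative - f' t) (at t)" for t
      using df by (auto intro!: derivative_eq_intros)
    show "continuous_on UNIV (\<lambda>v. - f' v)" using cf by (intro continuous_intros)
    show "(y has_real_derivative - f (y t)) (at t)" for t
    proof -
      have "((\<lambda>s. x (- s)) has_real_derivative f (x (- t)) * (-1)) (at t)"
        by (rule DERIV_chain2[OF dx]) (auto intro!: derivative_eq_intros)
      thus ?thesis by (simp add: y_def)
    qed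
    show "- f (y (- t0)) = 0" using z by (simp add: y_def)
    show "- t0 \<le> - t" using False by simp
  qed
  thus ?thesis by (simp add: y_def)
qed

lemma no_cross_le:
  fixes f f' x :: "real \<Rightarrow> real"
  assumes df: "\<And>t. (f has_real_derivative f' t) (at t)"
    and cf: "continuous_on UNIV f'"
    and dx: "\<And>t. (x has_real_derivative f (x t)) (at t)"
    and z: "f c = 0" and le: "x t0 \<le> c"
  shows "x t \<le> c"
proof (rule ccontr)
  assume "\<not> x t \<le> c" hence xt: "c < x t" by simp
  have contx: "continuous_on A x" for A
    using dx by (meson DERIV_continuous continuous_at_imp_continuous_on)
  obtain s where s: "x s = c"
  proof (cases "t0 \<le> t")
    case True
    from IVT'[where f=x and a=t0 and b=t and y=c, OF le _ True contx] xt that show ?thesis by auto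
  next
    case False
    hence "t \<le> t0" by simp
    from IVT2'[where f=x and a=t and b=t0 and y=c, OF le _ this contx] xt that show ?thesis by auto
  qed
  have "x t = x s" by (rule ode_const[OF df cf dx]) (use s z in simp)
  thus False using s xt by simp
qed

lemma no_cross_ge:
  fixes f f' x :: "real \<Rightarrow> real"
  assumes df: "\<And>t. (f has_real_derivative f' t) (at t)"
    and cf: "continuous_on UNIV f'"
    and dx: "\<And>t. (x has_real_derivative f (x t)) (at t)"
    and z: "f c = 0" and le: "x t0 \<ge> c"
  shows "x t \<ge> c"
proof (rule ccontr)
  assume "\<not> x t \<ge> c" hence xt: "x t < c" by simp
  have contx: "continuous_on A x" for A
    using dx by (meson DERIV_continuous continuous_at_imp_continuous_on)
  obtain s where s: "x s = c"
  proof (cases "t0 \<le> t")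
    case True
    from IVT2'[where f=x and a=t0 and b=t and y=c, OF _ le True contx] xt that show ?thesis by auto
  next
    case False
    hence "t \<le> t0" by simp
    from IVT'[where f=x and a=t and b=t0 and y=c, OF _ le this contx] xt that show ?thesis by auto
  qed
  have "x t = x s" by (rule ode_const[OF df cf dx]) (use s z in simp)
  thus False using s xt by simp
qed

lemma per_nat:
  assumes "\<And>t. g (t + T) = (g t :: real)"
  shows "g (t + real n * T) = g t"
proof (induction n)
  case (Suc n)
  have "t + real (Suc n) * T = (t + real n * T) + T" by (simp add: algebra_simps)
  hence "g (t + real (Suc n) * T) = g ((t + real n * T) + T)" by (rule arg_cong)
  also have "\<dots> = g (t + real n * T)" by (rule assms)
  also have "\<dots> = g t" by (rule Suc.IH)
  finally show ?case .
qed simp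

lemma per_int:
  assumes "\<And>t. g (t + T) = (g t :: real)"
  shows "g (t + real_of_int n * T) = g t"
proof (cases "n \<ge> 0")
  case True
  have "real (nat n) = real_of_int n" using True by simp
  thus ?thesis using per_nat[where g=g and T=T and t=t and n="nat n", OF assms] by simp
next
  case False
  have e: "real (nat (-n)) = - real_of_int n" using False by simp
  have "g ((t + real_of_int n * T) + real (nat (-n)) * T) = g (t + real_of_int n * T)"
    by (rule per_nat[where g=g and T=T, OF assms])
  moreover have "(t + real_of_int n * T) + real (nat (-n)) * T = t" unfolding e by (simp add: algebra_simps)
  ultimately show ?thesis by simp
qed

lemma per_reduce:
  fixes T t :: real assumes T: "T > 0"
  shows "t - real_of_int \<lfloor>t / T\<rfloor> * T \<in> {0..T}"
proof -
  have "real_of_int \<lfloor>t / T\<rfloor> \<le> t / T" "t / T < real_of_int \<lfloor>t / T\<rfloor> + 1" by linarith+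
  have "real_of_int \<lfloor>t / T\<rfloor> * T \<le> t / T * T"
    by (rule mult_right_mono) (use T \<open>real_of_int \<lfloor>t / T\<rfloor> \<le> t / T\<close> in auto)
  hence "real_of_int \<lfloor>t / T\<rfloor> * T \<le> t" using T by simp
  moreover have "t / T * T < (real_of_int \<lfloor>t / T\<rfloor> + 1) * T"
    by (rule mult_strict_right_mono) (use T \<open>t / T < real_of_int \<lfloor>t / T\<rfloor> + 1\<close> in auto)
  hence "t < (real_of_int \<lfloor>t / T\<rfloor> + 1) * T" using T by simp
  ultimately have "real_of_int \<lfloor>t / T\<rfloor> * T \<le> t" "t < (real_of_int \<lfloor>t / T\<rfloor> + 1) * T" .
  thus ?thesis by (auto simp: algebra_simps)
qed

lemma per_bounded:
  fixes g :: "real \<Rightarrow> real"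
  assumes c: "continuous_on UNIV g" and T: "T > 0" and p: "\<And>t. g (t + T) = g t"
  shows "\<exists>B. \<forall>t. \<bar>g t\<bar> \<le> B"
proof -
  have "compact (g ` {0..T})" by (rule compact_continuous_image) (auto intro: continuous_on_subset[OF c])
  then obtain B where B: "\<And>s. s \<in> {0..T} \<Longrightarrow> \<bar>g s\<bar> \<le> B"
    by (metis bounded_iff compact_imp_bounded image_eqI real_norm_def)
  have "\<bar>g t\<bar> \<le> B" for t
  proof -
    define s where "s = t - real_of_int \<lfloor>t / T\<rfloor> * T"
    have "g t = g (s + real_of_int \<lfloor>t / T\<rfloor> * T)" by (simp add: s_def)
    also have "\<dots> = g s" by (rule per_int[where g=g, OF p])
    finally show ?thesis using B per_reduce[OF T, of t] s_def by simp
  qed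
  thus ?thesis by blast
qed

lemma mvt_lower:
  fixes f x :: "real \<Rightarrow> real"
  assumes dx: "\<And>t. (x has_real_derivative f (x t)) (at t)"
    and lb: "\<And>s. s \<ge> 0 \<Longrightarrow> \<bar>f (x s)\<bar> \<ge> c" and t: "t \<ge> 0"
  shows "\<bar>x t - x 0\<bar> \<ge> c * t"
proof (cases "t = 0")
  case True thus ?thesis by simp
next
  case False
  hence "0 < t" using t by simp
  then obtain \<xi> where xi: "0 < \<xi>" "\<xi> < t" "x t - x 0 = (t - 0) * f (x \<xi>)"
    using MVT2[of 0 t x "\<lambda>s. f (x s)"] dx by blast
  have "\<bar>x t - x 0\<bar> = t * \<bar>f (x \<xi>)\<bar>" using xi t by (simp add: abs_mult)
  also have "\<dots> \<ge> t * c" using lb[of \<xi>] xi t by (simp add: mult_left_mono)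
  finally show ?thesis by (simp add: mult.commute)
qed



lemma comp_axis: "(y + h *\<^sub>R axis i (1::real)) $ j = y $ j + (if j = i then h else 0)"
  by (simp add: axis_def)

lemma grad_sep:
  fixes uu du :: "'n::finite \<Rightarrow> real \<Rightarrow> real"
  assumes d1: "\<And>i t. (uu i has_real_derivative du i t) (at t)"
  shows "gradient_vec (sep_sum uu) y = (\<chi> i. du i (y $ i))"
proof -
  have "partial_deriv (sep_sum uu) i y = du i (y $ i)" for i
  proof -
    have "((\<lambda>h. \<Sum>j\<in>UNIV. uu j (y $ j + (if j = i then h else 0))) has_real_derivative
          (\<Sum>j\<in>UNIV. du j (y $ j + (if j = i then 0 else 0)) * (if j = i then 1 else 0))) (at 0)"
      by (rule DERIV_sum, rule DERIV_chain2[OF d1]) (auto intro!: derivative_eq_intros)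
    hence "deriv (\<lambda>h. \<Sum>j\<in>UNIV. uu j (y $ j + (if j = i then h else 0))) 0 = du i (y $ i)"
      by (intro DERIV_imp_deriv) (simp add: if_distrib cong: if_cong)
    thus ?thesis unfolding partial_deriv_def sep_sum_def comp_axis .
  qed
  thus ?thesis unfolding gradient_vec_def by simp
qed

lemma lap_sep:
  fixes uu du ddu :: "'n::finite \<Rightarrow> real \<Rightarrow> real"
  assumes d1: "\<And>i t. (uu i has_real_derivative du i t) (at t)"
    and d2: "\<And>i t. (du i has_real_derivative ddu i t) (at t)"
  shows "laplacian (sep_sum uu) y = (\<Sum>i\<in>UNIV. ddu i (y $ i))"
proof -
  have "partial_deriv (\<lambda>z. gradient_vec (sep_sum uu) z $ i) i y = ddu i (y $ i)" for i
  proof -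
    have "((\<lambda>h. du i (y $ i + h)) has_real_derivative ddu i (y $ i + 0) * 1) (at 0)"
      by (rule DERIV_chain2[OF d2]) (auto intro!: derivative_eq_intros)
    hence "deriv (\<lambda>h. du i (y $ i + h)) 0 = ddu i (y $ i)" by (intro DERIV_imp_deriv) simp
    thus ?thesis unfolding partial_deriv_def grad_sep[OF d1] by (simp add: comp_axis)
  qed
  thus ?thesis unfolding laplacian_def divergence_def by simp
qed

lemma coord_flow:
  fixes X :: "real \<Rightarrow> real^'n \<Rightarrow> real^'n" and G :: "real^'n \<Rightarrow> real^'n"
  assumes "\<And>t. ((\<lambda>s. X s x) has_vector_derivative G (X t x)) (at t)"
  shows "((\<lambda>s. X s x $ i) has_real_derivative G (X t x) $ i) (at t)"
  using bounded_linear.has_vector_derivative[OF bounded_linear_vec_nth assms]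
  unfolding has_real_derivative_iff_has_vector_derivative .

lemma log_deriv:
  fixes f f' x :: "real \<Rightarrow> real"
  assumes df: "\<And>t. (f has_real_derivative f' t) (at t)"
    and dx: "\<And>t. (x has_real_derivative f (x t)) (at t)"
    and nz: "f (x s) \<noteq> 0"
  shows "((\<lambda>s. ln ((f (x s))^2) / 2) has_real_derivative f' (x s)) (at s)"
proof -
  have dfx: "((\<lambda>s. f (x s)) has_real_derivative f' (x s) * f (x s)) (at s)"
    by (rule DERIV_chain2[OF df dx])
  have sq: "0 < f (x s) * f (x s)" using nz by (metis not_real_square_gt_zero)
  have "((\<lambda>s. ln ((f (x s))^2) / 2) has_real_derivative
      (1 / (f (x s))^2) * (2 * f (x s) * (f' (x s) * f (x s))) / 2) (at s)"
    by (rule DERIV_cdivide, rule DERIV_chain2[OF DERIV_ln_divide])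
       (use nz sq in \<open>auto intro!: derivative_eq_intros dfx simp: power2_eq_square\<close>)
  moreover have "(1 / (f (x s))^2) * (2 * f (x s) * (f' (x s) * f (x s))) / 2 = f' (x s)"
    using nz by (simp add: field_simps power2_eq_square)
  ultimately show ?thesis by simp
qed

lemma trapped:
  fixes f f' x :: "real \<Rightarrow> real"
  assumes df: "\<And>t. (f has_real_derivative f' t) (at t)"
    and cf: "continuous_on UNIV f'"
    and dx: "\<And>t. (x has_real_derivative f (x t)) (at t)"
    and T: "T > 0" and p: "\<And>t. f (t + T) = f t" and z: "f z = 0"
  shows "\<exists>a b. \<forall>t. a \<le> x t \<and> x t \<le> b"
proof -
  define n where "n = \<lceil>(x 0 - z) / T\<rceil>"
  define m where "m = \<lfloor>(x 0 - z) / T\<rfloor>"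
  have zn: "f (z + real_of_int n * T) = 0" "f (z + real_of_int m * T) = 0"
    using per_int[where g=f, OF p] z by simp_all
  have "(x 0 - z) / T \<le> real_of_int n" unfolding n_def by linarith
  hence "(x 0 - z) / T * T \<le> real_of_int n * T" using T by (intro mult_right_mono) auto
  hence le: "x 0 \<le> z + real_of_int n * T" using T by simp
  have "real_of_int m \<le> (x 0 - z) / T" unfolding m_def by linarith
  hence "real_of_int m * T \<le> (x 0 - z) / T * T" using T by (intro mult_right_mono) auto
  hence ge: "x 0 \<ge> z + real_of_int m * T" using T by simp
  have "z + real_of_int m * T \<le> x t \<and> x t \<le> z + real_of_int n * T" for t
    using no_cross_le[OF df cf dx zn(1) le] no_cross_ge[OF df cf dx zn(2) ge] by blast
  thus ?thesis by blast
qed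

lemma sol_inf:
  fixes f f' x :: "real \<Rightarrow> real"
  assumes df: "\<And>t. (f has_real_derivative f' t) (at t)"
    and cf: "continuous_on UNIV f'"
    and dx: "\<And>t. (x has_real_derivative f (x t)) (at t)"
    and T: "T > 0" and p: "\<And>t. f (t + T) = f t" and z: "f z = 0"
    and e: "e > 0"
  shows "\<exists>t\<ge>0. \<bar>f (x t)\<bar> < e"
proof (rule ccontr)
  assume "\<not> ?thesis"
  hence lb: "\<And>s. s \<ge> 0 \<Longrightarrow> \<bar>f (x s)\<bar> \<ge> e" by force
  obtain a b where ab: "\<And>t. a \<le> x t \<and> x t \<le> b" using trapped[OF df cf dx T p z] by blast
  define t where "t = (\<bar>b - a\<bar> + 1) / e"
  have t0: "t \<ge> 0" using e by (simp add: t_def)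
  have "\<bar>x t - x 0\<bar> \<ge> e * t" by (rule mvt_lower[OF dx lb t0])
  moreover have "e * t = \<bar>b - a\<bar> + 1" using e by (simp add: t_def)
  moreover have "\<bar>x t - x 0\<bar> \<le> \<bar>b - a\<bar>" using ab[of t] ab[of 0] by linarith
  ultimately show False by linarith
qed

lemma sol_unb:
  fixes f f' x :: "real \<Rightarrow> real"
  assumes cf: "continuous_on UNIV f"
    and dx: "\<And>t. (x has_real_derivative f (x t)) (at t)"
    and T: "T > 0" and p: "\<And>t. f (t + T) = f t" and nz: "\<And>t. f t \<noteq> 0"
  shows "\<exists>c>0. \<forall>t\<ge>0. \<bar>x t - x 0\<bar> \<ge> c * t"
proof -
  have "continuous_on UNIV (\<lambda>t. 1 / f t)" using cf nz by (intro continuous_intros) auto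
  then obtain B where B: "\<And>t. \<bar>1 / f t\<bar> \<le> B"
    using per_bounded[of "\<lambda>t. 1 / f t" T] T p by auto
  have "\<bar>1 / f 0\<bar> > 0" using nz[of 0] by simp
  hence Bp: "B > 0" using B[of 0] by linarith
  have "\<bar>f t\<bar> \<ge> 1 / B" for t
  proof -
    have "1 / \<bar>f t\<bar> \<le> B" using B[of t] by simp
    thus ?thesis using nz[of t] Bp by (simp add: field_simps)
  qed
  hence "\<forall>t\<ge>0. \<bar>x t - x 0\<bar> \<ge> 1 / B * t" using mvt_lower[OF dx] by blast
  thus ?thesis using Bp by (intro exI[of _ "1/B"]) auto
qed

lemma const_sign:
  fixes f :: "real \<Rightarrow> real"
  assumes cf: "continuous_on UNIV f" and nz: "\<And>t. f t \<noteq> 0"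
  shows "f 0 * f s > 0"
proof (rule ccontr)
  assume a: "\<not> f 0 * f s > 0"
  define g where "g = (\<lambda>t. f 0 * f t)"
  have cg: "continuous_on A g" for A unfolding g_def
    by (intro continuous_intros continuous_on_subset[OF cf]) auto
  have g0: "g 0 > 0" using nz[of 0] unfolding g_def by (metis not_real_square_gt_zero)
  have gs: "g s \<le> 0" using a unfolding g_def by simp
  obtain r where "g r = 0"
  proof (cases "0 \<le> s")
    case True
    from IVT2'[where f=g and a=0 and b=s and y=0, OF gs _ True cg] g0 that show ?thesis by auto
  next
    case False hence "s \<le> 0" by simp
    from IVT'[where f=g and a=s and b=0 and y=0, OF gs _ this cg] g0 that show ?thesis by auto
  qed
  thus False using nz unfolding g_def by simp
qed

lemma sum_axis: "(\<Sum>j\<in>UNIV. c j *\<^sub>R axis j (1::real)) = (\<chi> j. c j)"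
  using basis_expansion[of "\<chi> j. c j"] by (simp add: scalar_mult_eq_scaleR)

lemma per_vec_int:
  fixes \<sigma> :: "real^'n \<Rightarrow> real"
  assumes p: "\<And>y. \<sigma> (y + T *\<^sub>R axis i 1) = \<sigma> y"
  shows "\<sigma> (y + (real_of_int n * T) *\<^sub>R axis i 1) = \<sigma> y"
proof -
  have "(\<lambda>s. \<sigma> (y + s *\<^sub>R axis i 1)) (0 + real_of_int n * T) = (\<lambda>s. \<sigma> (y + s *\<^sub>R axis i 1)) 0"
  proof (rule per_int)
    fix t
    have e: "y + (t + T) *\<^sub>R axis i 1 = (y + t *\<^sub>R axis i 1) + T *\<^sub>R axis i 1"
      by (simp add: algebra_simps scaleR_add_left)
    show "\<sigma> (y + (t + T) *\<^sub>R axis i 1) = \<sigma> (y + t *\<^sub>R axis i 1)" unfolding e by (rule p)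
  qed
  thus ?thesis by simp
qed

lemma per_vec_reduce:
  fixes \<sigma> :: "real^'n \<Rightarrow> real"
  assumes p: "\<And>y i. \<sigma> (y + T i *\<^sub>R axis i 1) = \<sigma> y" and T: "\<And>i. T i > 0"
  shows "\<exists>y'. (\<forall>i. 0 \<le> y' $ i \<and> y' $ i \<le> T i) \<and> \<sigma> y = \<sigma> y'"
proof -
  define n where "n i = \<lfloor>y $ i / T i\<rfloor>" for i
  have "finite S \<Longrightarrow> \<sigma> (y - (\<Sum>i\<in>S. (real_of_int (n i) * T i) *\<^sub>R axis i 1)) = \<sigma> y" for S
  proof (induction S rule: finite_induct)
    case (insert k S)
    have e2: "y - (\<Sum>i\<in>insert k S. (real_of_int (n i) * T i) *\<^sub>R axis i 1)
        = (y - (\<Sum>i\<in>S. (real_of_int (n i) * T i) *\<^sub>R axis i 1)) + (real_of_int (- n k) * T k) *\<^sub>R axis k 1"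
      using insert by (simp add: algebra_simps)
    have "\<sigma> (y - (\<Sum>i\<in>insert k S. (real_of_int (n i) * T i) *\<^sub>R axis i 1))
       = \<sigma> ((y - (\<Sum>i\<in>S. (real_of_int (n i) * T i) *\<^sub>R axis i 1)) + (real_of_int (- n k) * T k) *\<^sub>R axis k 1)"
      by (simp only: e2)
    also have "\<dots> = \<sigma> (y - (\<Sum>i\<in>S. (real_of_int (n i) * T i) *\<^sub>R axis i 1))"
      by (rule per_vec_int[where \<sigma>=\<sigma>, OF p])
    also have "\<dots> = \<sigma> y" by (rule insert.IH)
    finally show ?case .
  qed simp
  hence e: "\<sigma> (y - (\<Sum>i\<in>UNIV. (real_of_int (n i) * T i) *\<^sub>R axis i 1)) = \<sigma> y" by simp
  define y' where "y' = y - (\<Sum>i\<in>UNIV. (real_of_int (n i) * T i) *\<^sub>R axis i 1)"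
  have "y' $ i = y $ i - real_of_int \<lfloor>y $ i / T i\<rfloor> * T i" for i
    unfolding y'_def sum_axis n_def by simp
  hence "\<forall>i. 0 \<le> y' $ i \<and> y' $ i \<le> T i" using per_reduce[OF T] by simp
  thus ?thesis using e y'_def by metis
qed

lemma sigma_bounds:
  fixes \<sigma> :: "real^'n \<Rightarrow> real"
  assumes p: "\<And>y i. \<sigma> (y + T i *\<^sub>R axis i 1) = \<sigma> y" and T: "\<And>i. T i > 0"
    and c: "continuous_on UNIV \<sigma>" and pos: "\<And>y. \<sigma> y > 0"
  shows "\<exists>B. \<forall>y. \<bar>ln (\<sigma> y)\<bar> \<le> B"
proof -
  have nz: "\<And>y. \<sigma> y \<noteq> 0" using pos by (metis less_irrefl)
  define K where "K = (cbox 0 (\<chi> i. T i) :: (real^'n) set)"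
  have "compact ((\<lambda>y. ln (\<sigma> y)) ` K)" unfolding K_def
    by (rule compact_continuous_image) (use nz in \<open>auto intro!: continuous_intros continuous_on_subset[OF c]\<close>)
  then obtain B where B: "\<And>y. y \<in> K \<Longrightarrow> \<bar>ln (\<sigma> y)\<bar> \<le> B"
    by (metis bounded_iff compact_imp_bounded image_eqI real_norm_def)
  have "\<bar>ln (\<sigma> y)\<bar> \<le> B" for y
  proof -
    obtain y' where "\<forall>i. 0 \<le> y' $ i \<and> y' $ i \<le> T i" "\<sigma> y = \<sigma> y'"
      using per_vec_reduce[OF p T] by blast
    moreover have "y' \<in> K" using calculation(1) unfolding K_def mem_box_cart by simp
    ultimately show ?thesis using B by simp
  qed
  thus ?thesis by blast
qed

lemma sigma_line:
  fixes \<sigma> :: "real^'n \<Rightarrow> real"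
  assumes "(\<sigma> has_derivative D) (at y)"
  shows "((\<lambda>h. \<sigma> (y + h *\<^sub>R a)) has_real_derivative D a) (at 0)"
proof -
  have "(((\<lambda>z. \<sigma> z) \<circ> (\<lambda>h. y + h *\<^sub>R a)) has_derivative (D \<circ> (\<lambda>h. h *\<^sub>R a))) (at 0)"
    by (rule diff_chain_at) (use assms in \<open>auto intro!: derivative_eq_intros\<close>)
  moreover have "D \<circ> (\<lambda>h. h *\<^sub>R a) = (*) (D a)"
    using linear_scale[OF has_derivative_linear[OF assms]] by (auto simp: fun_eq_iff)
  ultimately show ?thesis unfolding has_field_derivative_def by (simp add: comp_def)
qed

lemma div_formula:
  fixes \<sigma> :: "real^'n::finite \<Rightarrow> real" and uu du ddu :: "'n \<Rightarrow> real \<Rightarrow> real"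
  assumes d1: "\<And>i t. (uu i has_real_derivative du i t) (at t)"
    and d2: "\<And>i t. (du i has_real_derivative ddu i t) (at t)"
    and ds: "(\<sigma> has_derivative D) (at y)"
  shows "divergence (\<lambda>z. \<sigma> z *\<^sub>R gradient_vec (sep_sum uu) z) y
       = (\<Sum>i\<in>UNIV. D (axis i 1) * du i (y $ i)) + (\<Sum>i\<in>UNIV. ddu i (y $ i)) * \<sigma> y"
proof -
  have "partial_deriv (\<lambda>z. (\<sigma> z *\<^sub>R gradient_vec (sep_sum uu) z) $ i) i y
      = D (axis i 1) * du i (y $ i) + ddu i (y $ i) * \<sigma> y" for i
  proof -
    have dd: "((\<lambda>h. du i (y $ i + h)) has_real_derivative ddu i (y $ i + 0) * 1) (at 0)"
      by (rule DERIV_chain2[OF d2]) (auto intro!: derivative_eq_intros)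
    have "deriv (\<lambda>h. \<sigma> (y + h *\<^sub>R axis i 1) * du i (y $ i + h)) 0 = D (axis i 1) * du i (y $ i) + ddu i (y $ i) * \<sigma> y"
      using DERIV_imp_deriv[OF DERIV_mult[OF sigma_line[OF ds, of "axis i 1"] dd]] by simp
    thus ?thesis unfolding partial_deriv_def grad_sep[OF d1] by (simp add: comp_axis)
  qed
  thus ?thesis unfolding divergence_def by (simp add: sum.distrib sum_distrib_right)
qed

lemma sigma_flow:
  fixes \<sigma> :: "real^'n::finite \<Rightarrow> real" and G :: "real^'n \<Rightarrow> real^'n"
  assumes ds: "\<And>y. (\<sigma> has_derivative D y) (at y)"
    and fl: "\<And>t. ((\<lambda>s. X s x) has_vector_derivative G (X t x)) (at t)"
  shows "((\<lambda>s. \<sigma> (X s x)) has_real_derivative (\<Sum>i\<in>UNIV. G (X t x) $ i * D (X t x) (axis i 1))) (at t)"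
proof -
  have "((\<sigma> \<circ> (\<lambda>s. X s x)) has_vector_derivative D (X t x) (G (X t x))) (at t within UNIV)"
    by (rule vector_derivative_diff_chain_within) (use fl ds in \<open>auto intro: has_derivative_at_withinI\<close>)
  moreover have "D (X t x) (G (X t x)) = (\<Sum>i\<in>UNIV. G (X t x) $ i * D (X t x) (axis i 1))"
  proof -
    have lin: "linear (D (X t x))" by (rule has_derivative_linear[OF ds])
    have "G (X t x) = (\<Sum>i\<in>UNIV. (G (X t x) $ i) *\<^sub>R axis i 1)" by (simp add: sum_axis)
    hence "D (X t x) (G (X t x)) = (\<Sum>i\<in>UNIV. D (X t x) ((G (X t x) $ i) *\<^sub>R axis i 1))"
      by (metis linear_sum[OF lin])
    also have "\<dots> = (\<Sum>i\<in>UNIV. G (X t x) $ i * D (X t x) (axis i 1))"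
      using linear_scale[OF lin] by simp
    finally show ?thesis .
  qed
  ultimately show ?thesis unfolding has_real_derivative_iff_has_vector_derivative by (simp add: comp_def)
qed

lemma cont_coord:
  assumes "continuous_on UNIV h"
  shows "continuous_on UNIV (\<lambda>y::real^'n. h (y $ i))"
  by (rule continuous_on_compose2[OF assms]) (auto intro: continuous_on_component continuous_on_id)

lemma coord_deriv:
  assumes "(g has_real_derivative g') (at (y $ i))"
  shows "((\<lambda>y::real^'n. g (y $ i)) has_derivative (\<lambda>v. g' * v $ i)) (at y)"
proof -
  have "((g \<circ> (\<lambda>y::real^'n. y $ i)) has_derivative ((*) g' \<circ> (\<lambda>v. v $ i))) (at y)"
    by (rule diff_chain_at)
       (use assms in \<open>auto intro: bounded_linear_imp_has_derivative simp: has_field_derivative_def\<close>)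
  thus ?thesis by (simp add: comp_def)
qed

lemma sigma_construct:
  fixes uu du ddu :: "'n::finite \<Rightarrow> real \<Rightarrow> real" and T :: "'n \<Rightarrow> real"
  assumes d1: "\<And>i t. (uu i has_real_derivative du i t) (at t)"
    and d2: "\<And>i t. (du i has_real_derivative ddu i t) (at t)"
    and c2: "\<And>i. continuous_on UNIV (ddu i)"
    and per: "\<And>i t. du i (t + T i) = du i t"
    and nz: "\<And>i t. du i t \<noteq> 0"
  shows "\<exists>\<sigma> :: real^'n \<Rightarrow> real. \<exists>\<sigma>'.
                (\<forall>y. (\<sigma> has_derivative \<sigma>' y) (at y))
              \<and> (\<forall>i. continuous_on UNIV (\<lambda>y. \<sigma>' y (axis i 1)))
              \<and> (\<forall>y. \<sigma> y > 0)
              \<and> (\<forall>y i. \<sigma> (y + T i *\<^sub>R axis i 1) = \<sigma> y)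
              \<and> (\<forall>y. divergence (\<lambda>z. \<sigma> z *\<^sub>R gradient_vec (sep_sum uu) z) y = 0)"
proof -
  define g where "g j s = du j 0 / du j s" for j s
  define g' where "g' j s = (0 * du j s - du j 0 * ddu j s) / (du j s * du j s)" for j s
  have cdu: "continuous_on UNIV (du j)" for j
    using d2 by (meson DERIV_continuous continuous_at_imp_continuous_on)
  have dg: "(g j has_real_derivative g' j s) (at s)" for j s
    unfolding g_def g'_def by (rule DERIV_divide[OF DERIV_const d2 nz])
  have cg: "continuous_on UNIV (g j)" for j unfolding g_def
    using cdu nz by (intro continuous_intros) auto
  have cg': "continuous_on UNIV (g' j)" for j unfolding g'_def
    using cdu c2 nz by (intro continuous_intros) auto
  have gpos: "g j s > 0" for j s
  proof -
    have "du j 0 * du j s > 0" by (rule const_sign[OF cdu nz])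
    thus ?thesis unfolding g_def by (simp add: zero_less_divide_iff zero_less_mult_iff)
  qed
  define \<sigma> where "\<sigma> y = (\<Prod>j\<in>UNIV. g j (y $ j))" for y :: "real^'n"
  define \<sigma>' where "\<sigma>' y = (\<lambda>v::real^'n. \<Sum>i\<in>UNIV. (g' i (y $ i) * v $ i) * (\<Prod>j\<in>UNIV - {i}. g j (y $ j)))" for y :: "real^'n"
  have D: "(\<sigma> has_derivative \<sigma>' y) (at y)" for y
  proof -
    have "((\<lambda>y. \<Prod>j\<in>UNIV. g j (y $ j)) has_derivative
        (\<lambda>v. \<Sum>i\<in>UNIV. (g' i (y $ i) * v $ i) * (\<Prod>j\<in>UNIV - {i}. g j (y $ j)))) (at y)"
      by (rule has_derivative_prod[where f = "\<lambda>j y. g j (y $ j)" and f' = "\<lambda>i v. g' i (y $ i) * v $ i"])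
         (rule coord_deriv[OF dg])
    thus ?thesis unfolding \<sigma>_def[abs_def] \<sigma>'_def .
  qed
  have C: "continuous_on UNIV (\<lambda>y. \<sigma>' y (axis i 1))" for i
    unfolding \<sigma>'_def
    by (intro continuous_intros cont_coord cg cg')
  have P: "\<sigma> y > 0" for y unfolding \<sigma>_def by (intro prod_pos) (simp add: gpos)
  have Per: "\<sigma> (y + T i *\<^sub>R axis i 1) = \<sigma> y" for y i
    unfolding \<sigma>_def comp_axis g_def by (rule prod.cong) (auto simp: per)
  have Div: "divergence (\<lambda>z. \<sigma> z *\<^sub>R gradient_vec (sep_sum uu) z) y = 0" for y
  proof -
    have "partial_deriv (\<lambda>z. (\<sigma> z *\<^sub>R gradient_vec (sep_sum uu) z) $ i) i y = 0" for i
    proof -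
      define K where "K = du i 0 * (\<Prod>j\<in>UNIV - {i}. g j (y $ j))"
      have "\<sigma> (y + h *\<^sub>R axis i 1) * du i (y $ i + h) = K" for h
      proof -
        have "\<sigma> (y + h *\<^sub>R axis i 1) = g i (y $ i + h) * (\<Prod>j\<in>UNIV - {i}. g j ((y + h *\<^sub>R axis i 1) $ j))"
          unfolding \<sigma>_def by (subst prod.remove[of UNIV i]) (auto simp: comp_axis)
        also have "(\<Prod>j\<in>UNIV - {i}. g j ((y + h *\<^sub>R axis i 1) $ j)) = (\<Prod>j\<in>UNIV - {i}. g j (y $ j))"
          by (rule prod.cong) (auto simp: axis_def)
        finally show ?thesis unfolding K_def g_def using nz[of i "y $ i + h"] by simp
      qed
      hence "(\<lambda>h. (\<sigma> (y + h *\<^sub>R axis i 1) *\<^sub>R gradient_vec (sep_sum uu) (y + h *\<^sub>R axis i 1)) $ i) = (\<lambda>h. K)"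
        by (simp add: grad_sep[OF d1] comp_axis)
      thus ?thesis unfolding partial_deriv_def by simp
    qed
    thus ?thesis unfolding divergence_def by simp
  qed
  show ?thesis using D C P Per Div by blast
qed



theorem proposition5p4:
  fixes uu du ddu :: "'n::finite \<Rightarrow> real \<Rightarrow> real"
    and T :: "'n \<Rightarrow> real"
    and X :: "real \<Rightarrow> real^'n \<Rightarrow> real^'n"
  assumes dim: "CARD('n) \<ge> 2"
    and d1: "\<And>i t. (uu i has_real_derivative du i t) (at t)"
    and d2: "\<And>i t. (du i has_real_derivative ddu i t) (at t)"
    and c2: "\<And>i. continuous_on UNIV (ddu i)"
    and Tpos: "\<And>i. T i > 0"
    and per: "\<And>i t. du i (t + T i) = du i t"
    and iso: "\<And>i t. du i t = 0 \<Longrightarrow> eventually (\<lambda>s. du i s \<noteq> 0) (at t)"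
    and degen: "\<And>i t. du i t = 0 \<Longrightarrow> ddu i t = 0"
    and flow0: "\<And>x. X 0 x = x"
    and flow: "\<And>x t. ((\<lambda>s. X s x) has_vector_derivative
                        gradient_vec (sep_sum uu) (X t x)) (at t)"
  shows "((\<forall>x. bounded (range (\<lambda>t. X t x))) \<longleftrightarrow> (\<forall>i. \<exists>t. du i t = 0))
    \<and> ((\<exists>C>0. \<forall>t\<ge>0. \<forall>x. \<bar>integral {0..t} (\<lambda>s. laplacian (sep_sum uu) (X s x))\<bar> \<le> C)
         \<longleftrightarrow> (\<forall>x::real^'n. (\<Prod>i\<in>UNIV. du i (x $ i)) \<noteq> 0))
    \<and> ((\<forall>x::real^'n. (\<Prod>i\<in>UNIV. du i (x $ i)) \<noteq> 0)
         \<longleftrightarrow> (\<exists>\<sigma> :: real^'n \<Rightarrow> real. \<exists>\<sigma>'.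
                (\<forall>y. (\<sigma> has_derivative \<sigma>' y) (at y))
              \<and> (\<forall>i. continuous_on UNIV (\<lambda>y. \<sigma>' y (axis i 1)))
              \<and> (\<forall>y. \<sigma> y > 0)
              \<and> (\<forall>y i. \<sigma> (y + T i *\<^sub>R axis i 1) = \<sigma> y)
              \<and> (\<forall>y. divergence (\<lambda>z. \<sigma> z *\<^sub>R gradient_vec (sep_sum uu) z) y = 0)))"
proof -
  define G where "G y = (\<chi> i. du i (y $ i))" for y :: "real^'n"
  have grad: "gradient_vec (sep_sum uu) y = G y" for y using grad_sep[OF d1] G_def by simp
  have lap: "laplacian (sep_sum uu) y = (\<Sum>i\<in>UNIV. ddu i (y $ i))" for y by (rule lap_sep[OF d1 d2])
  have fl: "((\<lambda>s. X s x) has_vector_derivative G (X t x)) (at t)" for x t using flow grad by simp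
  have cx: "((\<lambda>s. X s x $ i) has_real_derivative du i (X t x $ i)) (at t)" for x t i
    using coord_flow[where X=X and x=x and i=i and t=t, OF fl] by (simp add: G_def)
  have cdu: "continuous_on UNIV (du i)" for i
    using d2 by (meson DERIV_continuous continuous_at_imp_continuous_on)

  have P1: "(\<forall>x. bounded (range (\<lambda>t. X t x))) \<longleftrightarrow> (\<forall>i. \<exists>t. du i t = 0)"
  proof
    assume bd: "\<forall>x. bounded (range (\<lambda>t. X t x))"
    show "\<forall>i. \<exists>t. du i t = 0"
    proof (rule ccontr)
      assume "\<not> (\<forall>i. \<exists>t. du i t = 0)"
      then obtain i where nzi: "\<And>t. du i t \<noteq> 0" by blast
      obtain c where c: "c > 0" "\<forall>t\<ge>0. \<bar>X t 0 $ i - X 0 0 $ i\<bar> \<ge> c * t"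
        using sol_unb[OF cdu cx[where x=0 and i=i] Tpos per nzi] by blast
      obtain B where B: "\<And>t. norm (X t 0) \<le> B"
        using bd[rule_format, of 0] unfolding bounded_iff by auto
      define t where "t = (\<bar>B\<bar> + 1) / c"
      have t0: "t \<ge> 0" using c by (simp add: t_def)
      have "c * t \<le> \<bar>X t 0 $ i - X 0 0 $ i\<bar>" using c t0 by blast
      also have "\<dots> = \<bar>X t 0 $ i\<bar>" by (simp add: flow0)
      also have "\<dots> \<le> norm (X t 0)" by (rule component_le_norm_cart)
      also have "\<dots> \<le> B" by (rule B)
      finally have "c * t \<le> B" .
      moreover have "c * t = \<bar>B\<bar> + 1" using c by (simp add: t_def)
      ultimately show False by linarith
    qed
  next
    assume zs: "\<forall>i. \<exists>t. du i t = 0"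
    show "\<forall>x. bounded (range (\<lambda>t. X t x))"
    proof
      fix x
      have "\<forall>i. \<exists>a b. \<forall>t. a \<le> X t x $ i \<and> X t x $ i \<le> b"
      proof
        fix i
        obtain z where "du i z = 0" using zs by blast
        thus "\<exists>a b. \<forall>t. a \<le> X t x $ i \<and> X t x $ i \<le> b"
          by (rule trapped[OF d2 c2 cx[where x=x and i=i] Tpos per])
      qed
      then obtain a b where ab: "\<And>i t. a i \<le> X t x $ i \<and> X t x $ i \<le> b i" by metis
      have "norm (X t x) \<le> (\<Sum>i\<in>UNIV. \<bar>a i\<bar> + \<bar>b i\<bar>)" for t
      proof -
        have "norm (X t x) \<le> (\<Sum>i\<in>UNIV. \<bar>X t x $ i\<bar>)" by (rule norm_le_l1_cart)
        also have "\<dots> \<le> (\<Sum>i\<in>UNIV. \<bar>a i\<bar> + \<bar>b i\<bar>)"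
        proof (rule sum_mono)
          fix i
          have "a i \<le> X t x $ i" "X t x $ i \<le> b i" using ab by auto
          thus "\<bar>X t x $ i\<bar> \<le> \<bar>a i\<bar> + \<bar>b i\<bar>" by (auto simp: abs_if)
        qed
        finally show ?thesis .
      qed
      thus "bounded (range (\<lambda>t. X t x))" unfolding bounded_iff by auto
    qed
  qed

  have NZ: "(\<forall>x::real^'n. (\<Prod>i\<in>UNIV. du i (x $ i)) \<noteq> 0) \<longleftrightarrow> (\<forall>i t. du i t \<noteq> 0)"
  proof
    assume h: "\<forall>x::real^'n. (\<Prod>i\<in>UNIV. du i (x $ i)) \<noteq> 0"
    show "\<forall>i t. du i t \<noteq> 0"
    proof (intro allI)
      fix i t
      have "(\<Prod>j\<in>UNIV. du j ((\<chi> k. t) $ j)) \<noteq> 0" using h by blast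
      thus "du i t \<noteq> 0" by simp
    qed
  next
    assume "\<forall>i t. du i t \<noteq> 0"
    thus "\<forall>x::real^'n. (\<Prod>i\<in>UNIV. du i (x $ i)) \<noteq> 0" by simp
  qed

  define LL where "LL y = (\<Sum>j\<in>UNIV. ln ((du j (y $ j))^2) / 2)" for y :: "real^'n"
  have IF: "integral {0..t} (\<lambda>s. laplacian (sep_sum uu) (X s x)) = LL (X t x) - LL x"
    if t0: "t \<ge> 0" and nzx: "\<And>s j. du j (X s x $ j) \<noteq> 0" for t x
  proof -
    have d: "((\<lambda>s. LL (X s x)) has_real_derivative (\<Sum>j\<in>UNIV. ddu j (X s x $ j))) (at s)" for s
    proof -
      have dj: "((\<lambda>s. ln ((du j (X s x $ j))^2) / 2) has_real_derivative ddu j (X s x $ j)) (at s)" for j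
        by (rule log_deriv[OF d2 cx[where x=x and i=j] nzx])
      show ?thesis unfolding LL_def by (rule DERIV_sum) (rule dj)
    qed
    have "((\<lambda>s. laplacian (sep_sum uu) (X s x)) has_integral (LL (X t x) - LL (X 0 x))) {0..t}"
      unfolding lap
    proof (rule fundamental_theorem_of_calculus[OF t0])
      fix s show "((\<lambda>s. LL (X s x)) has_vector_derivative (\<Sum>j\<in>UNIV. ddu j (X s x $ j))) (at s within {0..t})"
        by (rule has_vector_derivative_at_within)
           (use d in \<open>simp add: has_real_derivative_iff_has_vector_derivative\<close>)
    qed
    thus ?thesis using flow0 by (simp add: integral_unique)
  qed

  have AB: "(\<exists>C>0. \<forall>t\<ge>0. \<forall>x. \<bar>integral {0..t} (\<lambda>s. laplacian (sep_sum uu) (X s x))\<bar> \<le> C)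
       \<longleftrightarrow> (\<forall>i t. du i t \<noteq> 0)"
  proof
    assume "\<exists>C>0. \<forall>t\<ge>0. \<forall>x. \<bar>integral {0..t} (\<lambda>s. laplacian (sep_sum uu) (X s x))\<bar> \<le> C"
    then obtain C where C: "C > 0" "\<And>t x. t \<ge> 0 \<Longrightarrow> \<bar>integral {0..t} (\<lambda>s. laplacian (sep_sum uu) (X s x))\<bar> \<le> C"
      by blast
    show "\<forall>i t. du i t \<noteq> 0"
    proof (rule ccontr)
      assume "\<not> (\<forall>i t. du i t \<noteq> 0)"
      then obtain i z where z: "du i z = 0" by blast
      have "\<exists>w. du j w \<noteq> 0" for j
      proof (cases "du j 0 = 0")
        case True
        show ?thesis using eventually_happens[OF iso[OF True]] by auto
      qed blast
      then obtain w where w: "\<And>j. du j (w j) \<noteq> 0" by metis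
      define x where "x = (\<chi> j. w j)"
      have nzX: "du j (X s x $ j) \<noteq> 0" for s j
      proof
        assume h: "du j (X s x $ j) = 0"
        have "X 0 x $ j = X s x $ j" by (rule ode_const[OF d2 c2 cx[where x=x and i=j] h])
        thus False using h w[of j] by (simp add: flow0 x_def)
      qed
      have "\<exists>B. \<forall>s. \<bar>du j s\<bar> \<le> B" for j by (rule per_bounded[OF cdu Tpos per])
      then obtain Bd where Bd: "\<And>j s. \<bar>du j s\<bar> \<le> Bd j" by metis
      define K where "K = (\<Sum>j\<in>UNIV. (Bd j)^2 / 2)"
      have lnle: "ln ((du j s)^2) / 2 \<le> (Bd j)^2 / 2" for j s
      proof -
        have "\<bar>du j s\<bar> \<le> \<bar>Bd j\<bar>" using Bd[of j s] by linarith
        hence sq: "(du j s)^2 \<le> (Bd j)^2" by (simp add: abs_le_square_iff)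
        show ?thesis
        proof (cases "du j s = 0")
          case True thus ?thesis by simp
        next
          case False
          hence "(du j s)^2 > 0" by simp
          hence "ln ((du j s)^2) \<le> (du j s)^2 - 1" by (rule ln_le_minus_one)
          thus ?thesis using sq by simp
        qed
      qed
      have up: "LL y \<le> ln ((du i (y $ i))^2) / 2 + K" for y
      proof -
        have "LL y = ln ((du i (y $ i))^2) / 2 + (\<Sum>j\<in>UNIV - {i}. ln ((du j (y $ j))^2) / 2)"
          unfolding LL_def by (subst sum.remove[of UNIV i]) auto
        also have "(\<Sum>j\<in>UNIV - {i}. ln ((du j (y $ j))^2) / 2) \<le> (\<Sum>j\<in>UNIV - {i}. (Bd j)^2 / 2)"
          by (rule sum_mono) (rule lnle)
        also have "\<dots> \<le> K" unfolding K_def by (rule sum_mono2) auto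
        finally show ?thesis by simp
      qed
      define e where "e = exp (- (C + K - LL x + 1))"
      have e0: "e > 0" by (simp add: e_def)
      obtain t where t: "t \<ge> 0" "\<bar>du i (X t x $ i)\<bar> < e"
        using sol_inf[OF d2 c2 cx[where x=x and i=i] Tpos per z e0] by blast
      define v where "v = du i (X t x $ i)"
      have v0: "v^2 > 0" using nzX[of i t] by (simp add: v_def)
      have "\<bar>v\<bar>^2 < e^2" using t(2) unfolding v_def by (intro power_strict_mono) auto
      hence "v^2 < e^2" by simp
      hence "ln (v^2) < ln (e^2)" using v0 e0 by simp
      also have "ln (e^2) = 2 * ln e" using e0 by (simp add: ln_realpow)
      also have "\<dots> = - 2 * (C + K - LL x + 1)" by (simp add: e_def)
      finally have lv: "ln (v^2) / 2 < - (C + K - LL x + 1)" by simp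
      have "integral {0..t} (\<lambda>s. laplacian (sep_sum uu) (X s x)) = LL (X t x) - LL x"
        by (rule IF[OF t(1) nzX])
      also have "\<dots> \<le> ln (v^2) / 2 + K - LL x" using up[of "X t x"] unfolding v_def by simp
      finally have "integral {0..t} (\<lambda>s. laplacian (sep_sum uu) (X s x)) < - C - 1" using lv by simp
      moreover have "\<bar>integral {0..t} (\<lambda>s. laplacian (sep_sum uu) (X s x))\<bar> \<le> C" by (rule C(2)[OF t(1)])
      ultimately show False by linarith
    qed
  next
    assume nz: "\<forall>i t. du i t \<noteq> 0"
    have "\<exists>M. \<forall>s. \<bar>ln ((du j s)^2) / 2\<bar> \<le> M" for j
    proof (rule per_bounded[OF _ Tpos])
      show "continuous_on UNIV (\<lambda>s. ln ((du j s)^2) / 2)"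
        using nz cdu by (intro continuous_intros) auto
      show "ln ((du j (t + T j))^2) / 2 = ln ((du j t)^2) / 2" for t by (simp add: per)
    qed
    then obtain M where M: "\<And>j s. \<bar>ln ((du j s)^2) / 2\<bar> \<le> M j" by metis
    have LLb: "\<bar>LL y\<bar> \<le> (\<Sum>j\<in>UNIV. M j)" for y
    proof -
      have "\<bar>LL y\<bar> \<le> (\<Sum>j\<in>UNIV. \<bar>ln ((du j (y $ j))^2) / 2\<bar>)" unfolding LL_def by (rule sum_abs)
      also have "\<dots> \<le> (\<Sum>j\<in>UNIV. M j)" by (rule sum_mono) (rule M)
      finally show ?thesis .
    qed
    have M0: "(\<Sum>j\<in>UNIV. M j) \<ge> 0" using LLb[of 0] by linarith
    show "\<exists>C>0. \<forall>t\<ge>0. \<forall>x. \<bar>integral {0..t} (\<lambda>s. laplacian (sep_sum uu) (X s x))\<bar> \<le> C"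
    proof (intro exI[of _ "2 * (\<Sum>j\<in>UNIV. M j) + 1"] conjI allI impI)
      show "2 * (\<Sum>j\<in>UNIV. M j) + 1 > 0" using M0 by simp
      fix t :: real and x assume t0: "t \<ge> 0"
      have "integral {0..t} (\<lambda>s. laplacian (sep_sum uu) (X s x)) = LL (X t x) - LL x"
        by (rule IF[OF t0]) (use nz in blast)
      thus "\<bar>integral {0..t} (\<lambda>s. laplacian (sep_sum uu) (X s x))\<bar> \<le> 2 * (\<Sum>j\<in>UNIV. M j) + 1"
        using LLb[of "X t x"] LLb[of x] by simp
    qed
  qed

  have CA: "\<exists>C>0. \<forall>t\<ge>0. \<forall>x. \<bar>integral {0..t} (\<lambda>s. laplacian (sep_sum uu) (X s x))\<bar> \<le> C"
    if hC: "\<exists>\<sigma> :: real^'n \<Rightarrow> real. \<exists>\<sigma>'.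
                (\<forall>y. (\<sigma> has_derivative \<sigma>' y) (at y))
              \<and> (\<forall>i. continuous_on UNIV (\<lambda>y. \<sigma>' y (axis i 1)))
              \<and> (\<forall>y. \<sigma> y > 0)
              \<and> (\<forall>y i. \<sigma> (y + T i *\<^sub>R axis i 1) = \<sigma> y)
              \<and> (\<forall>y. divergence (\<lambda>z. \<sigma> z *\<^sub>R gradient_vec (sep_sum uu) z) y = 0)"
  proof -
    obtain \<sigma> :: "real^'n \<Rightarrow> real" and \<sigma>' where
      ds: "\<And>y. (\<sigma> has_derivative \<sigma>' y) (at y)" and pos: "\<And>y. \<sigma> y > 0"
      and ps: "\<And>y i. \<sigma> (y + T i *\<^sub>R axis i 1) = \<sigma> y"
      and dv: "\<And>y. divergence (\<lambda>z. \<sigma> z *\<^sub>R gradient_vec (sep_sum uu) z) y = 0"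
      using hC by blast
    have csig: "continuous_on UNIV \<sigma>"
      using ds by (meson has_derivative_continuous continuous_at_imp_continuous_on)
    obtain B where B: "\<And>y. \<bar>ln (\<sigma> y)\<bar> \<le> B" using sigma_bounds[OF ps Tpos csig pos] by blast
    have key: "(\<Sum>i\<in>UNIV. \<sigma>' y (axis i 1) * du i (y $ i)) + (\<Sum>i\<in>UNIV. ddu i (y $ i)) * \<sigma> y = 0" for y
      using div_formula[where y=y, OF d1 d2 ds] dv[of y] by simp
    have ID: "integral {0..t} (\<lambda>s. laplacian (sep_sum uu) (X s x)) = - (ln (\<sigma> (X t x)) - ln (\<sigma> x))"
      if t0: "t \<ge> 0" for t x
    proof -
      have d: "((\<lambda>s. - ln (\<sigma> (X s x))) has_real_derivative (\<Sum>j\<in>UNIV. ddu j (X s x $ j))) (at s)" for s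
      proof -
        have d0: "((\<lambda>s. \<sigma> (X s x)) has_real_derivative (\<Sum>i\<in>UNIV. G (X s x) $ i * \<sigma>' (X s x) (axis i 1))) (at s)"
          by (rule sigma_flow[OF ds fl])
        have "((\<lambda>s. ln (\<sigma> (X s x))) has_real_derivative 1 / \<sigma> (X s x) * (\<Sum>i\<in>UNIV. G (X s x) $ i * \<sigma>' (X s x) (axis i 1))) (at s)"
          by (rule DERIV_chain2[OF DERIV_ln_divide[OF pos] d0])
        moreover have "(\<Sum>i\<in>UNIV. G (X s x) $ i * \<sigma>' (X s x) (axis i 1)) = - (\<Sum>j\<in>UNIV. ddu j (X s x $ j)) * \<sigma> (X s x)"
          using key[of "X s x"] by (simp add: G_def mult.commute)
        ultimately have "((\<lambda>s. ln (\<sigma> (X s x))) has_real_derivative - (\<Sum>j\<in>UNIV. ddu j (X s x $ j))) (at s)"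
          using pos[of "X s x"] by simp
        thus ?thesis using DERIV_minus by fastforce
      qed
      have "((\<lambda>s. laplacian (sep_sum uu) (X s x)) has_integral ((- ln (\<sigma> (X t x))) - (- ln (\<sigma> (X 0 x))))) {0..t}"
        unfolding lap
      proof (rule fundamental_theorem_of_calculus[OF t0])
        fix s show "((\<lambda>s. - ln (\<sigma> (X s x))) has_vector_derivative (\<Sum>j\<in>UNIV. ddu j (X s x $ j))) (at s within {0..t})"
          by (rule has_vector_derivative_at_within)
             (use d in \<open>simp add: has_real_derivative_iff_has_vector_derivative\<close>)
      qed
      thus ?thesis using flow0 by (simp add: integral_unique)
    qed
    show ?thesis
    proof (intro exI[of _ "2 * \<bar>B\<bar> + 1"] conjI allI impI)
      show "2 * \<bar>B\<bar> + 1 > 0" by simp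
      fix t :: real and x assume t0: "t \<ge> 0"
      show "\<bar>integral {0..t} (\<lambda>s. laplacian (sep_sum uu) (X s x))\<bar> \<le> 2 * \<bar>B\<bar> + 1"
        unfolding ID[OF t0] using B[of x] B[of "X t x"] by linarith
    qed
  qed

  have BC: "(\<forall>x::real^'n. (\<Prod>i\<in>UNIV. du i (x $ i)) \<noteq> 0)
         \<longleftrightarrow> (\<exists>\<sigma> :: real^'n \<Rightarrow> real. \<exists>\<sigma>'.
                (\<forall>y. (\<sigma> has_derivative \<sigma>' y) (at y))
              \<and> (\<forall>i. continuous_on UNIV (\<lambda>y. \<sigma>' y (axis i 1)))
              \<and> (\<forall>y. \<sigma> y > 0)
              \<and> (\<forall>y i. \<sigma> (y + T i *\<^sub>R axis i 1) = \<sigma> y)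
              \<and> (\<forall>y. divergence (\<lambda>z. \<sigma> z *\<^sub>R gradient_vec (sep_sum uu) z) y = 0))"
  proof
    assume "\<forall>x::real^'n. (\<Prod>i\<in>UNIV. du i (x $ i)) \<noteq> 0"
    hence nz: "\<And>i t. du i t \<noteq> 0" using NZ by blast
    show "\<exists>\<sigma> :: real^'n \<Rightarrow> real. \<exists>\<sigma>'.
                (\<forall>y. (\<sigma> has_derivative \<sigma>' y) (at y))
              \<and> (\<forall>i. continuous_on UNIV (\<lambda>y. \<sigma>' y (axis i 1)))
              \<and> (\<forall>y. \<sigma> y > 0)
              \<and> (\<forall>y i. \<sigma> (y + T i *\<^sub>R axis i 1) = \<sigma> y)
              \<and> (\<forall>y. divergence (\<lambda>z. \<sigma> z *\<^sub>R gradient_vec (sep_sum uu) z) y = 0)"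
      by (rule sigma_construct[OF d1 d2 c2 per nz])
  next
    assume h: "\<exists>\<sigma> :: real^'n \<Rightarrow> real. \<exists>\<sigma>'.
                (\<forall>y. (\<sigma> has_derivative \<sigma>' y) (at y))
              \<and> (\<forall>i. continuous_on UNIV (\<lambda>y. \<sigma>' y (axis i 1)))
              \<and> (\<forall>y. \<sigma> y > 0)
              \<and> (\<forall>y i. \<sigma> (y + T i *\<^sub>R axis i 1) = \<sigma> y)
              \<and> (\<forall>y. divergence (\<lambda>z. \<sigma> z *\<^sub>R gradient_vec (sep_sum uu) z) y = 0)"
    show "\<forall>x::real^'n. (\<Prod>i\<in>UNIV. du i (x $ i)) \<noteq> 0"
      using CA[OF h] AB NZ by blast
  qed
  show ?thesis using P1 AB NZ BC by blast
qed

end
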